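(* For each $\eta\in(0,\pi/3)$ and each integer $n\ge0$, $\angle b_0z_0z_1=\angle z_nz_{n+1}z_{n+2}=\angle w_nw_{n+1}w_{n+2}=\pi-\eta$.
   Context: Let $a=\frac{e^{-i\eta}}{2\cos\eta}$, $c=\frac{1}{1-|a|^4}$, and for integers $j\ge0$ put $z_j=ca^{j+1}$, $w_j=1-c|a|^2a^j$, $b_0=a+c|a|^4$. For $u,v,w\in\mathbb{C}$, $\angle uvw=\arg\frac{w-v}{u-v}$ with $\arg$ taking values in $[0,2\pi)$. *)

theory Defs
  imports "HOL-Analysis.Analysis" "HOL-Complex_Analysis.Complex_Analysis"
begin

definition arg2pi :: "complex \<Rightarrow> real" where
  "arg2pi z = (if Arg z < 0 then Arg z + 2 * pi else Arg z)"

definition cangle :: "complex \<Rightarrow> complex \<Rightarrow> complex \<Rightarrow> real" where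
  "cangle u v w = arg2pi ((w - v) / (u - v))"

definition aa :: "real \<Rightarrow> complex" where
  "aa \<eta> = exp (- \<i> * of_real \<eta>) / of_real (2 * cos \<eta>)"

definition cc :: "real \<Rightarrow> complex" where
  "cc \<eta> = 1 / (1 - of_real (cmod (aa \<eta>) ^ 4))"

definition zz :: "real \<Rightarrow> nat \<Rightarrow> complex" where
  "zz \<eta> j = cc \<eta> * aa \<eta> ^ (j + 1)"

definition ww :: "real \<Rightarrow> nat \<Rightarrow> complex" where
  "ww \<eta> j = 1 - cc \<eta> * of_real (cmod (aa \<eta>) ^ 2) * aa \<eta> ^ j"

definition bb0 :: "real \<Rightarrow> complex" where
  "bb0 \<eta> = aa \<eta> + cc \<eta> * of_real (cmod (aa \<eta>) ^ 4)"

end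

theory Submission
  imports Defs
begin

lemma aa_norm:
  assumes "0 < cos \<eta>"
  shows "cmod (aa \<eta>) = 1 / (2 * cos \<eta>)"
  using assms by (simp add: aa_def norm_divide)

lemma neg_aa:
  assumes "0 < cos \<eta>"
  shows "- aa \<eta> = of_real (1 / (2 * cos \<eta>)) * exp (\<i> * of_real (pi - \<eta>))"
proof -
  have "exp (\<i> * of_real (pi - \<eta>)) = exp (\<i> * pi) * exp (- \<i> * of_real \<eta>)"
  proof -
    have "\<i> * of_real (pi - \<eta>) = \<i> * pi + (- \<i> * of_real \<eta>)" by (simp add: algebra_simps)
    thus ?thesis by (simp only: exp_add)
  qed
  also have "\<dots> = - exp (- \<i> * of_real \<eta>)" by simp
  finally show ?thesis by (simp add: aa_def divide_simps)
qed

lemma key: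
  assumes "0 < \<eta>" "\<eta> < pi / 3" "0 < t"
  shows "arg2pi (of_real t * - aa \<eta>) = pi - \<eta>"
proof -
  have c: "0 < cos \<eta>" using assms by (intro cos_gt_zero) auto
  have "of_real t * - aa \<eta> = of_real (t * (1 / (2 * cos \<eta>))) * exp (\<i> * of_real (pi - \<eta>))"
    using neg_aa[OF c] by simp
  hence "Arg (of_real t * - aa \<eta>) = pi - \<eta>"
    by (intro Arg_unique[of "t * (1 / (2 * cos \<eta>))" "pi - \<eta>"]) (use assms c in auto)
  thus ?thesis using assms by (simp add: arg2pi_def)
qed

lemma facts:
  assumes "0 < \<eta>" "\<eta> < pi / 3"
  shows "0 < cos \<eta>" "cmod (aa \<eta>) < 1" "aa \<eta> \<noteq> 0" "aa \<eta> \<noteq> 1"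
proof -
  show c: "0 < cos \<eta>" using assms by (intro cos_gt_zero) auto
  have "cos (pi/3) < cos \<eta>" using assms by (intro cos_monotone_0_pi) auto
  hence "1/2 < cos \<eta>" by (simp add: cos_60)
  thus "cmod (aa \<eta>) < 1" using c by (simp add: aa_norm)
  thus "aa \<eta> \<noteq> 1" by auto
  show "aa \<eta> \<noteq> 0" using c by (simp add: aa_def)
qed

lemma alg:
  fixes q a :: complex
  assumes "1 - q \<noteq> 0"
  shows "a + 1 / (1 - q) * q - 1 / (1 - q) * a = 1 / (1 - q) * q * (1 - a)"
proof -
  define k where "k = 1 / (1 - q)"
  have k: "k * (1 - q) = 1" using assms by (simp add: k_def)
  have "a + k * q - k * a - k * q * (1 - a) = a * (1 - k * (1 - q))" by (simp add: algebra_simps)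
  also have "\<dots> = 0" using k by simp
  finally show ?thesis unfolding k_def[symmetric] by simp
qed

lemma rat1:
  fixes C a :: complex
  assumes "C \<noteq> 0" "1 - a \<noteq> 0"
  shows "C * a * (a - 1) / (C * (1 - a)) = of_real 1 * - a"
proof -
  have "C * a * (a - 1) = (C * (1 - a)) * (- a)" by (simp add: algebra_simps)
  thus ?thesis using assms by simp
qed

lemma rat2:
  fixes C a :: complex
  assumes "C \<noteq> 0" "1 - a \<noteq> 0"
  shows "C * a * (1 - a) / (- C * (1 - a)) = of_real 1 * - a"
proof -
  have "C * a * (1 - a) = (- C * (1 - a)) * (- a)" by (simp add: algebra_simps)
  thus ?thesis using assms by simp
qed

theorem lemma6p1:
  fixes \<eta> :: real and n :: nat
  assumes "0 < \<eta>" and "\<eta> < pi / 3"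
  shows "cangle (bb0 \<eta>) (zz \<eta> 0) (zz \<eta> 1) = pi - \<eta> \<and>
         cangle (zz \<eta> n) (zz \<eta> (n + 1)) (zz \<eta> (n + 2)) = pi - \<eta> \<and>
         cangle (ww \<eta> n) (ww \<eta> (n + 1)) (ww \<eta> (n + 2)) = pi - \<eta>"
proof -
  note F = facts[OF assms]
  define a where "a = aa \<eta>"
  define r where "r = cmod a"
  have r0: "0 < r" "r < 1" using F by (auto simp: r_def a_def)
  have r4: "r ^ 4 < 1" using r0 by (simp add: power_less_one_iff)
  have a1: "1 - a \<noteq> 0" using F by (auto simp: a_def)
  have a0: "a \<noteq> 0" using F by (auto simp: a_def)
  have cc: "cc \<eta> = of_real (1 / (1 - r ^ 4))" by (simp add: cc_def r_def a_def)
  have cc0: "cc \<eta> \<noteq> 0"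
  proof -
    have "1 / (1 - r ^ 4) \<noteq> (0::real)" using r4 by simp
    thus ?thesis unfolding cc of_real_eq_0_iff .
  qed
  have nz: "(1::complex) - of_real r ^ 4 \<noteq> 0"
  proof -
    have "(1::complex) - of_real r ^ 4 = of_real (1 - r ^ 4)" by simp
    thus ?thesis using r4 by (simp only: of_real_eq_0_iff)
  qed
  have 1: "(zz \<eta> 1 - zz \<eta> 0) / (bb0 \<eta> - zz \<eta> 0) = of_real (1 / r ^ 4) * - a"
  proof -
    have "bb0 \<eta> - zz \<eta> 0 = cc \<eta> * of_real (r ^ 4) * (1 - a)"
      using alg[OF nz, of a] unfolding bb0_def zz_def cc
      by (simp add: a_def[symmetric] r_def[symmetric])
    moreover have "zz \<eta> 1 - zz \<eta> 0 = cc \<eta> * a * (a - 1)"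
      unfolding zz_def by (simp add: a_def[symmetric] power2_eq_square algebra_simps)
    moreover have "(cc \<eta> * a * (a - 1)) / (cc \<eta> * of_real (r ^ 4) * (1 - a)) = of_real (1 / r ^ 4) * - a"
    proof -
      have "a - 1 = - (1 - a)" by simp
      then show ?thesis using r0 a1 cc0 by (simp add: field_simps)
    qed
    ultimately show ?thesis by simp
  qed
  have 2: "(zz \<eta> (n + 2) - zz \<eta> (n + 1)) / (zz \<eta> n - zz \<eta> (n + 1)) = of_real 1 * - a"
  proof -
    have E: "zz \<eta> (n + 2) - zz \<eta> (n + 1) = (cc \<eta> * a ^ (n+1)) * a * (a - 1)"
      "zz \<eta> n - zz \<eta> (n + 1) = (cc \<eta> * a ^ (n+1)) * (1 - a)"
      unfolding zz_def by (simp_all add: a_def[symmetric] power2_eq_square algebra_simps)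
    show ?thesis unfolding E by (rule rat1) (use a0 a1 cc0 in auto)
  qed
  have 3: "(ww \<eta> (n + 2) - ww \<eta> (n + 1)) / (ww \<eta> n - ww \<eta> (n + 1)) = of_real 1 * - a"
  proof -
    define d where "d = cc \<eta> * of_real (r ^ 2)"
    have d0: "d \<noteq> 0" using cc0 r0 by (simp add: d_def)
    have E: "ww \<eta> (n + 2) - ww \<eta> (n + 1) = (d * a ^ n) * a * (1 - a)"
      "ww \<eta> n - ww \<eta> (n + 1) = - (d * a ^ n) * (1 - a)"
      unfolding ww_def d_def by (simp_all add: a_def[symmetric] r_def[symmetric] power2_eq_square algebra_simps)
    show ?thesis unfolding E by (rule rat2) (use a0 a1 d0 in auto)
  qed
  have rp: "0 < 1 / r ^ 4" using r0 by simp
  show ?thesis unfolding cangle_def 1 2 3 a_def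
    using key[OF assms rp] key[OF assms, of 1] by simp
qed

end
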